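(* Let $\mathcal{H}_1=\mathcal{H}_{A_1}\otimes\mathcal{H}_{B_1}$ and $\mathcal{H}_2=\mathcal{H}_{A_2}\otimes\mathcal{H}_{B_2}$ be finite-dimensional bipartite Hilbert spaces, and let $N,K\geq 1$ be integers. Let $\sigma$ be a positive semidefinite operator on $\mathcal{H}_1$ with Schmidt number $N$ (with respect to the split $A_1|B_1$). Let $\eta$ be an operator on $\mathcal{H}_2$ that is positive on states with Schmidt number $KN$ (with respect to the split $A_2|B_2$). Then the operator $\sigma\otimes\eta$, acting on $\mathcal{H}_1\otimes\mathcal{H}_2\cong\mathcal{H}_A\otimes\mathcal{H}_B$ with $\mathcal{H}_A=\mathcal{H}_{A_1}\otimes\mathcal{H}_{A_2}$ and $\mathcal{H}_B=\mathcal{H}_{B_1}\otimes\mathcal{H}_{B_2}$, is positive on states with Schmidt number $K$ (with respect to the split $A|B$).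
   Context: The Schmidt rank of a pure vector $|\psi\rangle\in\mathcal{H}_X\otimes\mathcal{H}_Y$ is the number of nonzero terms in its Schmidt decomposition. The Schmidt number of a positive semidefinite operator $\rho$ on $\mathcal{H}_X\otimes\mathcal{H}_Y$ is the smallest $k$ such that $\rho$ can be written as a nonnegative combination of projectors $|\psi_i\rangle\langle\psi_i|$ onto vectors of Schmidt rank at most $k$. A Hermitian operator $X$ is said to be positive on states with Schmidt number $k$ if $\langle\psi|X|\psi\rangle\geq 0$ for every vector $|\psi\rangle$ of Schmidt rank at most $k$ (equivalently $\mathrm{Tr}(X\rho)\geq 0$ for every state $\rho$ of Schmidt number at most $k$). *)

theory Defs
  imports "HOL-Analysis.Analysis"
begin

text \<open>Finite-dimensional Hilbert spaces are modelled as coordinate spaces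
  'i \<Rightarrow> complex over a finite basis type 'i.  A bipartite space
  H_X \<otimes> H_Y has basis 'x \<times> 'y.\<close>

type_synonym 'i vec = "'i \<Rightarrow> complex"
type_synonym 'i op = "'i \<Rightarrow> 'i \<Rightarrow> complex"

definition inner_c :: "('i::finite) vec \<Rightarrow> 'i vec \<Rightarrow> complex" where
  "inner_c u v = (\<Sum>x\<in>UNIV. cnj (u x) * v x)"

definition apply_op :: "('i::finite) op \<Rightarrow> 'i vec \<Rightarrow> 'i vec" where
  "apply_op X v = (\<lambda>x. \<Sum>y\<in>UNIV. X x y * v y)"

definition expect :: "('i::finite) vec \<Rightarrow> 'i op \<Rightarrow> complex" where
  "expect v X = inner_c v (apply_op X v)"

definition hermitian_op :: "('i::finite) op \<Rightarrow> bool" where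
  "hermitian_op X \<longleftrightarrow> (\<forall>x y. X y x = cnj (X x y))"

definition psd_op :: "('i::finite) op \<Rightarrow> bool" where
  "psd_op X \<longleftrightarrow> hermitian_op X \<and> (\<forall>v. 0 \<le> Re (expect v X))"

definition orthonormal_fam :: "nat \<Rightarrow> (nat \<Rightarrow> ('i::finite) vec) \<Rightarrow> bool" where
  "orthonormal_fam r e \<longleftrightarrow>
     (\<forall>i<r. \<forall>j<r. inner_c (e i) (e j) = (if i = j then 1 else 0))"

definition schmidt_decomp ::
  "(('x::finite) \<times> ('y::finite)) vec \<Rightarrow> nat \<Rightarrow> bool" where
  "schmidt_decomp psi r \<longleftrightarrow>
     (\<exists>(s::nat \<Rightarrow> real) (e::nat \<Rightarrow> 'x vec) (f::nat \<Rightarrow> 'y vec).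
        (\<forall>i<r. s i > 0) \<and> orthonormal_fam r e \<and> orthonormal_fam r f \<and>
        psi = (\<lambda>(x, y). \<Sum>i<r. complex_of_real (s i) * e i x * f i y))"

definition schmidt_rank :: "(('x::finite) \<times> ('y::finite)) vec \<Rightarrow> nat" where
  "schmidt_rank psi = (LEAST r. schmidt_decomp psi r)"

definition proj :: "('i::finite) vec \<Rightarrow> 'i op" where
  "proj psi = (\<lambda>x y. psi x * cnj (psi y))"

definition sn_le :: "(('x::finite) \<times> ('y::finite)) op \<Rightarrow> nat \<Rightarrow> bool" where
  "sn_le rho k \<longleftrightarrow>
     (\<exists>(n::nat) (c::nat \<Rightarrow> real) (psi::nat \<Rightarrow> ('x \<times> 'y) vec).
        (\<forall>i<n. c i \<ge> 0 \<and> schmidt_rank (psi i) \<le> k) \<and>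
        rho = (\<lambda>u v. \<Sum>i<n. complex_of_real (c i) * proj (psi i) u v))"

definition schmidt_number :: "(('x::finite) \<times> ('y::finite)) op \<Rightarrow> nat" where
  "schmidt_number rho = (LEAST k. sn_le rho k)"

definition pos_on_SN :: "(('x::finite) \<times> ('y::finite)) op \<Rightarrow> nat \<Rightarrow> bool" where
  "pos_on_SN X k \<longleftrightarrow> hermitian_op X \<and>
     (\<forall>psi. schmidt_rank psi \<le> k \<longrightarrow> 0 \<le> Re (expect psi X))"

definition tensor_op ::
  "(('a1::finite) \<times> ('b1::finite)) op \<Rightarrow> (('a2::finite) \<times> ('b2::finite)) op
     \<Rightarrow> (('a1 \<times> 'a2) \<times> ('b1 \<times> 'b2)) op" where
  "tensor_op S E = (\<lambda>((a1, a2), (b1, b2)) ((a1', a2'), (b1', b2')).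
      S (a1, b1) (a1', b1') * E (a2, b2) (a2', b2'))"

end

theory Submission
  imports Defs
begin

lemma apply_op_add: "apply_op X (\<lambda>x. u x + w x) = (\<lambda>x. apply_op X u x + apply_op X w x)"
  by (simp add: apply_op_def ring_distribs sum.distrib)
lemma apply_op_scale: "apply_op X (\<lambda>x. c * u x) = (\<lambda>x. c * apply_op X u x)"
  by (simp add: apply_op_def sum_distrib_left mult_ac)
lemma inner_c_add1: "inner_c (\<lambda>x. u x + w x) z = inner_c u z + inner_c w z"
  by (simp add: inner_c_def ring_distribs sum.distrib)
lemma inner_c_add2: "inner_c z (\<lambda>x. u x + w x) = inner_c z u + inner_c z w"
  by (simp add: inner_c_def ring_distribs sum.distrib)
lemma inner_c_scale1: "inner_c (\<lambda>x. c * u x) z = cnj c * inner_c u z"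
  by (simp add: inner_c_def sum_distrib_left mult_ac)
lemma inner_c_scale2: "inner_c z (\<lambda>x. c * u x) = c * inner_c z u"
  by (simp add: inner_c_def sum_distrib_left mult_ac)
lemma inner_c_cnj: "cnj (inner_c u w) = inner_c w u"
  by (simp add: inner_c_def mult_ac)
lemma inner_c_self: "inner_c u u = complex_of_real (\<Sum>x\<in>UNIV. (cmod (u x))\<^sup>2)"
  unfolding inner_c_def of_real_sum complex_norm_square by (simp only: mult.commute)
lemma inner_c_self_zero: "(\<Sum>x\<in>UNIV. (cmod ((u::'a::finite vec) x))\<^sup>2) = 0 \<Longrightarrow> u = (\<lambda>_. 0)"
  by (subst (asm) sum_nonneg_eq_0_iff) auto

lemma herm_cnj: "hermitian_op X \<Longrightarrow> cnj (X x y) = X y x"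
  unfolding hermitian_op_def by metis

lemma herm_swap:
  assumes h: "hermitian_op X"
  shows "inner_c u (apply_op X w) = cnj (inner_c w (apply_op X u))"
proof -
  have "cnj (inner_c w (apply_op X u)) = (\<Sum>x\<in>UNIV. \<Sum>y\<in>UNIV. w x * (X y x * cnj (u y)))"
    by (simp add: inner_c_def apply_op_def sum_distrib_left herm_cnj[OF h])
  also have "\<dots> = (\<Sum>y\<in>UNIV. \<Sum>x\<in>UNIV. w x * (X y x * cnj (u y)))"
    by (rule sum.swap)
  also have "\<dots> = inner_c u (apply_op X w)"
    by (simp add: inner_c_def apply_op_def sum_distrib_left mult_ac)
  finally show ?thesis by simp
qed

lemma psd_null:
  assumes h: "hermitian_op X" and pos: "\<forall>v. 0 \<le> Re (expect v X)"
    and z: "Re (expect u X) = 0"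
  shows "apply_op X u = (\<lambda>_. 0)"
proof -
  define w where "w = apply_op X u"
  define a where "a = (\<Sum>x\<in>UNIV. (cmod (w x))\<^sup>2)"
  define b where "b = Re (expect w X)"
  have a0: "a \<ge> 0" unfolding a_def by (simp add: sum_nonneg)
  have b0: "b \<ge> 0" using pos b_def by auto
  have exp: "Re (expect (\<lambda>x. u x + complex_of_real t * w x) X) = 2 * t * a + t^2 * b" for t
  proof -
    have wu: "inner_c w (apply_op X u) = complex_of_real a"
      unfolding w_def[symmetric] a_def by (rule inner_c_self)
    have uw: "inner_c u (apply_op X w) = complex_of_real a"
      using herm_swap[OF h, of u w] wu by simp
    have e: "expect (\<lambda>x. u x + complex_of_real t * w x) X =
      expect u X + complex_of_real t * inner_c w (apply_op X u)
      + complex_of_real t * inner_c u (apply_op X w)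
      + complex_of_real t * complex_of_real t * expect w X"
      unfolding expect_def apply_op_add apply_op_scale inner_c_add1 inner_c_add2 inner_c_scale1
          inner_c_scale2 by (simp add: algebra_simps)
    have r: "Re (complex_of_real t * complex_of_real t * expect w X) = t * t * b"
      unfolding b_def by simp
    show ?thesis
      unfolding e wu uw using z r by (simp add: power2_eq_square)
  qed
  have "a = 0"
  proof (rule ccontr)
    assume "a \<noteq> 0"
    with a0 have ap: "a > 0" by simp
    define t where "t = - a / (b + 1)"
    have "0 \<le> 2 * t * a + t^2 * b" using pos exp[of t] by metis
    also have "2 * t * a + t^2 * b = a^2 * (- b - 2) / (b+1)^2"
      using b0 unfolding t_def by (simp add: field_simps power2_eq_square add_nonneg_eq_0_iff)
    also have "\<dots> < 0" using ap b0 by (intro divide_neg_pos mult_pos_neg) auto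
    finally show False by simp
  qed
  then have "w = (\<lambda>_. 0)" unfolding a_def by (rule inner_c_self_zero)
  then show ?thesis unfolding w_def .
qed


lemma expect_add_scale:
  "expect (\<lambda>x. z x + t * w x) X = expect z X + cnj t * inner_c w (apply_op X z)
      + t * inner_c z (apply_op X w) + cnj t * t * expect w X"
  unfolding expect_def apply_op_add apply_op_scale inner_c_add1 inner_c_add2 inner_c_scale1
     inner_c_scale2 by (simp add: algebra_simps)

lemma expect_diff_scale:
  "expect z (\<lambda>u w. A u w - k * B u w) = expect z A - k * expect z B"
  unfolding expect_def inner_c_def apply_op_def
  by (simp add: algebra_simps sum_subtractf sum_distrib_left)

lemma expect_proj: "expect z (proj v) = inner_c z v * inner_c v z"
  unfolding expect_def inner_c_def apply_op_def proj_def
  by (simp add: sum_distrib_left sum_distrib_right mult_ac) (rule sum.swap)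

lemma inner_delta1: "inner_c (\<lambda>x. if x = a then 1 else 0) y = y a"
proof -
  have "inner_c (\<lambda>x. if x = a then 1 else 0) y = (\<Sum>x\<in>UNIV. if x = a then y x else 0)"
    unfolding inner_c_def by (rule sum.cong) auto
  then show ?thesis by simp
qed

lemma apply_delta: "apply_op X (\<lambda>x. if x = a then 1 else 0) = (\<lambda>x. X x a)"
proof -
  have "(\<Sum>y\<in>UNIV. X x y * (if y = a then 1 else 0)) = (\<Sum>y\<in>UNIV. if y = a then X x a else 0)" for x
    by (rule sum.cong) auto
  then show ?thesis unfolding apply_op_def by simp
qed

lemma psd_decomp_support:
  fixes X :: "'i::finite op"
  assumes "finite S" "psd_op X" "\<forall>u w. u \<notin> S \<or> w \<notin> S \<longrightarrow> X u w = 0"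
  shows "\<exists>(n::nat) c psi. (\<forall>i<n. c i \<ge> 0) \<and>
           X = (\<lambda>u v. \<Sum>i<n. complex_of_real (c i) * proj (psi i) u v)"
  using assms
proof (induction S arbitrary: X rule: finite_induct)
  case empty
  then have X0: "X = (\<lambda>u v. 0)" by auto
  show ?case by (intro exI[where x="0::nat"]) (simp add: X0)
next
  case (insert a S)
  have h: "hermitian_op X" and pos: "\<forall>v. 0 \<le> Re (expect v X)"
    using insert.prems unfolding psd_op_def by auto
  define da where "da = (\<lambda>x. if x = a then (1::complex) else 0)"
  have eda: "expect da X = X a a"
    unfolding expect_def da_def apply_delta inner_delta1 by simp
  have Xaa: "X a a = complex_of_real (Re (X a a))"
    using herm_cnj[OF h, of a a] by (simp add: complex_eq_iff)
  have r0: "Re (X a a) \<ge> 0" using pos[rule_format, of da] eda by simp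
  show ?case
  proof (cases "Re (X a a) = 0")
    case True
    have "apply_op X da = (\<lambda>_. 0)"
      by (rule psd_null[OF h pos]) (simp add: eda True)
    then have col: "X u a = 0" for u unfolding da_def apply_delta by metis
    have row: "X a u = 0" for u using herm_cnj[OF h, of u a] col[of u] by simp
    have "\<forall>u w. u \<notin> S \<or> w \<notin> S \<longrightarrow> X u w = 0"
    proof (intro allI impI)
      fix u w assume "u \<notin> S \<or> w \<notin> S"
      then show "X u w = 0" using insert.prems(2) col row by (cases "u = a"; cases "w = a") auto
    qed
    then show ?thesis by (rule insert.IH[OF insert.prems(1)])
  next
    case False
    with r0 have rpos: "Re (X a a) > 0" by simp
    define r where "r = Re (X a a)"
    define v where "v = (\<lambda>u. X u a)"
    define X' where "X' = (\<lambda>u w. X u w - complex_of_real (1 / r) * proj v u w)"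
    have rp: "r > 0" using rpos r_def by simp
    have Xaa': "X a a = complex_of_real r" using Xaa unfolding r_def .
    have hX': "hermitian_op X'"
      unfolding hermitian_op_def X'_def proj_def using herm_cnj[OF h] by simp
    have posX': "0 \<le> Re (expect z X')" for z
    proof -
      define c where "c = inner_c z v"
      define t where "t = - cnj c / complex_of_real r"
      have 1: "inner_c z (apply_op X da) = c" unfolding c_def v_def da_def apply_delta by simp
      have 2: "inner_c da (apply_op X z) = cnj c"
        using herm_swap[OF h, of da z] 1 by simp
      have e1: "expect (\<lambda>x. z x + t * da x) X = expect z X + cnj t * cnj c + t * c + cnj t * t * complex_of_real r"
        unfolding expect_add_scale 1 2 eda Xaa' by simp
      have vz: "inner_c v z = cnj c" unfolding c_def by (simp add: inner_c_cnj)
      have e2: "expect z X' = expect z X - complex_of_real (1 / r) * (c * cnj c)"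
        unfolding X'_def expect_diff_scale expect_proj c_def[symmetric] vz by simp
      have q: "cnj t * cnj c + t * c + cnj t * t * complex_of_real r = - complex_of_real (1 / r) * (c * cnj c)"
        using rp unfolding t_def by (simp add: field_simps)
      have "expect (\<lambda>x. z x + t * da x) X = expect z X + (cnj t * cnj c + t * c + cnj t * t * complex_of_real r)"
        unfolding e1 by (simp only: add.assoc)
      also have "\<dots> = expect z X'" unfolding q e2 by simp
      finally have "expect z X' = expect (\<lambda>x. z x + t * da x) X" by simp
      then show ?thesis using pos by simp
    qed
    have psdX': "psd_op X'" using hX' posX' unfolding psd_op_def by simp
    have suppX': "\<forall>u w. u \<notin> S \<or> w \<notin> S \<longrightarrow> X' u w = 0"
    proof (intro allI impI)
      fix u w assume uw: "u \<notin> S \<or> w \<notin> S"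
      have col: "cnj (X w a) = X a w" for w using herm_cnj[OF h] by simp
      show "X' u w = 0"
      proof (cases "u = a \<or> w = a")
        case True
        then show ?thesis
          unfolding X'_def proj_def v_def using rp Xaa' col herm_cnj[OF h, of a u]
          by (auto simp: field_simps)
      next
        case False
        then have "u \<notin> insert a S \<or> w \<notin> insert a S" using uw by auto
        then show ?thesis
          unfolding X'_def proj_def v_def using insert.prems(2) by auto
      qed
    qed
    obtain n :: nat and c psi where cn: "\<forall>i<n. c i \<ge> 0"
      and X'eq: "X' = (\<lambda>u v. \<Sum>i<n. complex_of_real (c i) * proj (psi i) u v)"
      using insert.IH[OF psdX' suppX'] by blast
    define c' where "c' = c(n := 1 / r)"
    define psi' where "psi' = psi(n := v)"
    have Xeq: "X = (\<lambda>u w. \<Sum>i<Suc n. complex_of_real (c' i) * proj (psi' i) u w)"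
    proof (intro ext)
      fix u w
      have "X u w = X' u w + complex_of_real (1 / r) * proj v u w" unfolding X'_def by simp
      also have "\<dots> = (\<Sum>i<Suc n. complex_of_real (c' i) * proj (psi' i) u w)"
        unfolding X'eq c'_def psi'_def by simp
      finally show "X u w = (\<Sum>i<Suc n. complex_of_real (c' i) * proj (psi' i) u w)" .
    qed
    have cpos: "\<forall>i<Suc n. c' i \<ge> 0" using cn rp unfolding c'_def by simp
    show ?thesis by (rule exI[of _ "Suc n"], rule exI[of _ c'], rule exI[of _ psi'], rule conjI[OF cpos Xeq])
  qed
qed

lemma psd_decomp:
  fixes X :: "'i::finite op"
  assumes "psd_op X"
  shows "\<exists>(n::nat) c psi. (\<forall>i<n. c i \<ge> 0) \<and>
           X = (\<lambda>u v. \<Sum>i<n. complex_of_real (c i) * proj (psi i) u v)"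
  using psd_decomp_support[of UNIV X] assms by simp



lemma ortho_coeff_zero:
  assumes on: "orthonormal_fam r e" and z: "\<forall>x. (\<Sum>i<r. c i * e i x) = 0" and k: "k < r"
  shows "c k = 0"
proof -
  have "0 = (\<Sum>x\<in>UNIV. cnj (e k x) * (\<Sum>i<r. c i * e i x))" using z by simp
  also have "\<dots> = (\<Sum>x\<in>UNIV. \<Sum>i<r. c i * (cnj (e k x) * e i x))"
    by (simp add: sum_distrib_left mult_ac)
  also have "\<dots> = (\<Sum>i<r. \<Sum>x\<in>UNIV. c i * (cnj (e k x) * e i x))"
    by (rule sum.swap)
  also have "\<dots> = (\<Sum>i<r. c i * inner_c (e k) (e i))"
    by (simp add: inner_c_def sum_distrib_left)
  also have "\<dots> = (\<Sum>i<r. if i = k then c i else 0)"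
    using on k unfolding orthonormal_fam_def by (intro sum.cong) auto
  also have "\<dots> = c k" using k by simp
  finally show ?thesis by simp
qed



lemma norm_vec_nrm: "norm (v::complex^'x::finite) = sqrt (\<Sum>x\<in>UNIV. (cmod (v $ x))\<^sup>2)"
  unfolding norm_vec_def L2_set_def by simp

lemma eigen_exists:
  fixes psi :: "('x::finite \<times> 'y::finite) vec"
  assumes nz: "psi (x0, y0) \<noteq> 0"
  shows "\<exists>u (lam::real). inner_c u u = 1 \<and> lam > 0 \<and>
     inner_c (\<lambda>y. \<Sum>x\<in>UNIV. cnj (u x) * psi (x,y)) (\<lambda>y. \<Sum>x\<in>UNIV. cnj (u x) * psi (x,y)) = complex_of_real lam \<and>
     (\<forall>x. (\<Sum>y\<in>UNIV. cnj (\<Sum>x'\<in>UNIV. cnj (u x') * psi (x',y)) * psi (x,y)) = complex_of_real lam * u x)"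
proof -
  define ctr where "ctr u = (\<lambda>y. \<Sum>x\<in>UNIV. cnj (u x) * psi (x,y))" for u :: "'x vec"
  define F where "F u = (\<Sum>y\<in>UNIV. (cmod (ctr u y))\<^sup>2)" for u
  define nrm where "nrm u = (\<Sum>x\<in>UNIV. (cmod (u x))\<^sup>2)" for u :: "'x vec"
  define G where "G v = F (vec_nth v)" for v :: "complex^'x"
  have cont: "continuous_on (sphere 0 1) G"
    unfolding G_def F_def ctr_def by (intro continuous_intros)
  have ne: "sphere (0::complex^'x) 1 \<noteq> {}" by simp
  obtain v0 where v0s: "v0 \<in> sphere 0 1" and v0m: "\<forall>v\<in>sphere 0 1. G v \<le> G v0"
    using continuous_attains_sup[OF compact_sphere ne cont] by blast
  define u where "u = vec_nth v0"
  define lam where "lam = F u"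
  have nrm_u: "nrm u = 1"
  proof -
    have "norm v0 = 1" using v0s by simp
    then have "sqrt (nrm u) = 1" unfolding u_def nrm_def norm_vec_nrm by simp
    then show ?thesis by simp
  qed
  have F_nonneg: "F w \<ge> 0" for w unfolding F_def by (simp add: sum_nonneg)
  have nrm_nonneg: "nrm w \<ge> 0" for w unfolding nrm_def by (simp add: sum_nonneg)
  have ctr_scale: "ctr (\<lambda>x. complex_of_real k * w x) y = complex_of_real k * ctr w y" for k w y
    unfolding ctr_def by (simp add: sum_distrib_left mult_ac)
  have F_scale: "F (\<lambda>x. complex_of_real k * w x) = k\<^sup>2 * F w" for k w
    unfolding F_def ctr_scale by (simp add: norm_mult power_mult_distrib sum_distrib_left)
  have nrm_scale: "nrm (\<lambda>x. complex_of_real k * w x) = k\<^sup>2 * nrm w" for k w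
    unfolding nrm_def by (simp add: norm_mult power_mult_distrib sum_distrib_left)
  have bound: "F w \<le> lam * nrm w" for w
  proof (cases "nrm w = 0")
    case True
    then have "w = (\<lambda>_. 0)" unfolding nrm_def by (rule inner_c_self_zero)
    then have "F w = 0" unfolding F_def ctr_def by simp
    then show ?thesis using True by simp
  next
    case False
    then have np: "nrm w > 0" using nrm_nonneg[of w] by simp
    define q where "q = sqrt (nrm w)"
    have qp: "q > 0" using np q_def by simp
    have qq: "q\<^sup>2 = nrm w" using np q_def by simp
    define v where "v = (\<chi> x. complex_of_real (1/q) * w x)"
    have vv: "vec_nth v = (\<lambda>x. complex_of_real (1/q) * w x)"
      unfolding v_def by (rule ext) (simp only: vec_lambda_beta)
    have "nrm (vec_nth v) = 1"
      using qp qq np unfolding vv nrm_scale by (simp add: power_divide)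
    then have "v \<in> sphere 0 1" by (simp add: norm_vec_nrm nrm_def)
    then have "G v \<le> G v0" using v0m by blast
    then have "(1/q)\<^sup>2 * F w \<le> lam" unfolding G_def lam_def u_def[symmetric] vv F_scale .
    then have "F w \<le> lam * q\<^sup>2" using qp by (simp add: field_simps power_divide)
    then show ?thesis using qq by simp
  qed
  define rho where "rho = (\<lambda>x x'. \<Sum>y\<in>UNIV. psi (x,y) * cnj (psi (x',y)))"
  have exp_rho: "expect w rho = complex_of_real (F w)" for w
  proof -
    have "expect w rho = (\<Sum>x\<in>UNIV. \<Sum>x'\<in>UNIV. \<Sum>y\<in>UNIV. cnj (w x) * psi (x,y) * (cnj (psi (x',y)) * w x'))"
      unfolding expect_def inner_c_def apply_op_def rho_def
      by (simp add: sum_distrib_left sum_distrib_right mult_ac)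
    also have "\<dots> = (\<Sum>x\<in>UNIV. \<Sum>y\<in>UNIV. \<Sum>x'\<in>UNIV. cnj (w x) * psi (x,y) * (cnj (psi (x',y)) * w x'))"
      by (rule sum.cong[OF refl], rule sum.swap)
    also have "\<dots> = (\<Sum>y\<in>UNIV. \<Sum>x\<in>UNIV. \<Sum>x'\<in>UNIV. cnj (w x) * psi (x,y) * (cnj (psi (x',y)) * w x'))"
      by (rule sum.swap)
    also have "\<dots> = (\<Sum>y\<in>UNIV. ctr w y * cnj (ctr w y))"
      unfolding ctr_def by (simp add: sum_distrib_left sum_distrib_right cnj_sum mult_ac)
    also have "\<dots> = complex_of_real (F w)"
      unfolding F_def of_real_sum complex_norm_square by simp
    finally show ?thesis .
  qed
  define Idl where "Idl = (\<lambda>(x::'x) x'. if x = x' then complex_of_real lam else 0)"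
  have exp_Idl: "expect w Idl = complex_of_real (lam * nrm w)" for w
  proof -
    have aI: "apply_op Idl w = (\<lambda>x. complex_of_real lam * w x)"
    proof
      fix x
      have "apply_op Idl w x = (\<Sum>y\<in>UNIV. if y = x then complex_of_real lam * w x else 0)"
        unfolding apply_op_def Idl_def by (rule sum.cong) auto
      then show "apply_op Idl w x = complex_of_real lam * w x" by simp
    qed
    show ?thesis unfolding expect_def aI inner_c_scale2 inner_c_self nrm_def by simp
  qed
  define Xop where "Xop = (\<lambda>x x'. Idl x x' - 1 * rho x x')"
  have expX: "expect w Xop = complex_of_real (lam * nrm w - F w)" for w
    unfolding Xop_def expect_diff_scale exp_Idl exp_rho by simp
  have hX: "hermitian_op Xop"
    unfolding hermitian_op_def Xop_def Idl_def rho_def by (simp add: cnj_sum mult_ac)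
  have posX: "\<forall>w. 0 \<le> Re (expect w Xop)" using bound by (simp add: expX)
  have zX: "Re (expect u Xop) = 0" using nrm_u by (simp add: expX lam_def)
  have null: "apply_op Xop u = (\<lambda>_. 0)" by (rule psd_null[OF hX posX zX])
  have eig: "(\<Sum>y\<in>UNIV. cnj (ctr u y) * psi (x,y)) = complex_of_real lam * u x" for x
  proof -
    have "(\<Sum>y\<in>UNIV. cnj (ctr u y) * psi (x,y)) = (\<Sum>y\<in>UNIV. \<Sum>x'\<in>UNIV. psi (x,y) * cnj (psi (x',y)) * u x')"
      unfolding ctr_def by (simp add: cnj_sum sum_distrib_left sum_distrib_right mult_ac)
    also have "\<dots> = (\<Sum>x'\<in>UNIV. \<Sum>y\<in>UNIV. psi (x,y) * cnj (psi (x',y)) * u x')"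
      by (rule sum.swap)
    also have "\<dots> = (\<Sum>x'\<in>UNIV. rho x x' * u x')"
      unfolding rho_def by (simp add: sum_distrib_right)
    finally have 1: "(\<Sum>y\<in>UNIV. cnj (ctr u y) * psi (x,y)) = (\<Sum>x'\<in>UNIV. rho x x' * u x')" .
    have "apply_op Xop u x = 0" using null by simp
    then have "(\<Sum>x'\<in>UNIV. Idl x x' * u x') - (\<Sum>x'\<in>UNIV. rho x x' * u x') = 0"
      unfolding apply_op_def Xop_def by (simp add: left_diff_distrib sum_subtractf)
    moreover have "(\<Sum>x'\<in>UNIV. Idl x x' * u x') = complex_of_real lam * u x"
    proof -
      have "(\<Sum>x'\<in>UNIV. Idl x x' * u x') = (\<Sum>x'\<in>UNIV. if x' = x then complex_of_real lam * u x else 0)"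
        unfolding Idl_def by (rule sum.cong) auto
      then show ?thesis by simp
    qed
    ultimately show ?thesis using 1 by simp
  qed
  have lam_pos: "lam > 0"
  proof -
    define w0 where "w0 = (\<lambda>x. if x = x0 then (1::complex) else 0)"
    have "nrm w0 = 1"
    proof -
      have "nrm w0 = (\<Sum>x\<in>UNIV. if x = x0 then 1 else 0)"
        unfolding nrm_def w0_def by (rule sum.cong) auto
      then show ?thesis by simp
    qed
    then have Fl: "F w0 \<le> lam" using bound[of w0] by simp
    have cw: "ctr w0 y = psi (x0, y)" for y
    proof -
      have "ctr w0 y = (\<Sum>x\<in>UNIV. if x = x0 then psi (x0,y) else 0)"
        unfolding ctr_def w0_def by (rule sum.cong) auto
      then show ?thesis by simp
    qed
    have "(cmod (psi (x0,y0)))\<^sup>2 \<le> F w0"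
      unfolding F_def cw by (rule member_le_sum) auto
    moreover have "(cmod (psi (x0,y0)))\<^sup>2 > 0" using nz by simp
    ultimately show ?thesis using Fl by linarith
  qed
  have A: "inner_c u u = 1" using nrm_u unfolding inner_c_self nrm_def by simp
  have B: "inner_c (ctr u) (ctr u) = complex_of_real lam"
    unfolding inner_c_self lam_def F_def by simp
  show ?thesis
  proof (rule exI[of _ u], rule exI[of _ lam], intro conjI allI)
    show "inner_c u u = 1" by (rule A)
    show "lam > 0" by (rule lam_pos)
    show "inner_c (\<lambda>y. \<Sum>x\<in>UNIV. cnj (u x) * psi (x,y)) (\<lambda>y. \<Sum>x\<in>UNIV. cnj (u x) * psi (x,y)) = complex_of_real lam"
      using B unfolding ctr_def .
    fix x
    show "(\<Sum>y\<in>UNIV. cnj (\<Sum>x'\<in>UNIV. cnj (u x') * psi (x',y)) * psi (x,y)) = complex_of_real lam * u x"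
      using eig[of x] unfolding ctr_def .
  qed
qed



lemma svd_exists:
  fixes psi :: "('x::finite \<times> 'y::finite) vec" and J :: "'j set"
  assumes "finite J" "\<forall>x y. psi (x,y) = (\<Sum>j\<in>J. a j x * b j y)"
  shows "\<exists>r \<le> card J. schmidt_decomp psi r"
  using assms
proof (induction "card J" arbitrary: J psi a b rule: less_induct)
  case less
  note fin = less.prems(1) and rep = less.prems(2)
  show ?case
  proof (cases "\<forall>x y. psi (x,y) = 0")
    case True
    have E: "psi = (\<lambda>(x,y). 0)"
    proof (rule ext)
      fix p :: "'x \<times> 'y"
      show "psi p = (\<lambda>(x,y). 0) p"
        using True by (cases p) simp
    qed
    have "schmidt_decomp psi 0"
      unfolding schmidt_decomp_def orthonormal_fam_def
      by (rule exI[of _ "\<lambda>_. 0::real"], rule exI[of _ "\<lambda>_ _. 0::complex"], rule exI[of _ "\<lambda>_ _. 0::complex"]) (simp add: E)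
    then show ?thesis by (intro exI[of _ "0::nat"]) simp
  next
    case False
    then obtain x0 y0 where nz: "psi (x0,y0) \<noteq> 0" by blast
    obtain u lam where u1: "inner_c u u = 1" and lp: "lam > 0"
      and ff0: "inner_c (\<lambda>y. \<Sum>x\<in>UNIV. cnj (u x) * psi (x,y)) (\<lambda>y. \<Sum>x\<in>UNIV. cnj (u x) * psi (x,y)) = complex_of_real lam"
      and eig0: "\<forall>x. (\<Sum>y\<in>UNIV. cnj (\<Sum>x'\<in>UNIV. cnj (u x') * psi (x',y)) * psi (x,y)) = complex_of_real lam * u x"
      using eigen_exists[of psi x0 y0, OF nz] by blast
    define f where "f = (\<lambda>y. \<Sum>x\<in>UNIV. cnj (u x) * psi (x,y))"
    have ff: "inner_c f f = complex_of_real lam" using ff0 unfolding f_def .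
    have eig: "(\<Sum>y\<in>UNIV. cnj (f y) * psi (x,y)) = complex_of_real lam * u x" for x
      using eig0 unfolding f_def by blast
    define m where "m j = inner_c u (a j)" for j
    define d where "d j = inner_c f (b j)" for j
    define a' where "a' j x = a j x - u x * m j" for j x
    define psi' where "psi' = (\<lambda>(x,y). psi (x,y) - u x * f y)"
    have f_rep: "f y = (\<Sum>j\<in>J. m j * b j y)" for y
    proof -
      have "f y = (\<Sum>x\<in>UNIV. \<Sum>j\<in>J. cnj (u x) * a j x * b j y)"
        unfolding f_def rep[rule_format] by (simp add: sum_distrib_left mult_ac)
      also have "\<dots> = (\<Sum>j\<in>J. \<Sum>x\<in>UNIV. cnj (u x) * a j x * b j y)" by (rule sum.swap)
      also have "\<dots> = (\<Sum>j\<in>J. m j * b j y)"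
        unfolding m_def inner_c_def by (simp add: sum_distrib_right)
      finally show ?thesis .
    qed
    have u_rep: "complex_of_real lam * u x = (\<Sum>j\<in>J. d j * a j x)" for x
    proof -
      have "complex_of_real lam * u x = (\<Sum>y\<in>UNIV. \<Sum>j\<in>J. cnj (f y) * b j y * a j x)"
        unfolding eig[symmetric] rep[rule_format] by (simp add: sum_distrib_left mult_ac)
      also have "\<dots> = (\<Sum>j\<in>J. \<Sum>y\<in>UNIV. cnj (f y) * b j y * a j x)" by (rule sum.swap)
      also have "\<dots> = (\<Sum>j\<in>J. d j * a j x)"
        unfolding d_def inner_c_def by (simp add: sum_distrib_right)
      finally show ?thesis .
    qed
    have dm: "(\<Sum>j\<in>J. d j * m j) = complex_of_real lam"
    proof -
      have "(\<Sum>j\<in>J. d j * m j) = (\<Sum>j\<in>J. \<Sum>x\<in>UNIV. cnj (u x) * (d j * a j x))"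
        unfolding m_def inner_c_def by (simp add: sum_distrib_left mult_ac)
      also have "\<dots> = (\<Sum>x\<in>UNIV. \<Sum>j\<in>J. cnj (u x) * (d j * a j x))" by (rule sum.swap)
      also have "\<dots> = (\<Sum>x\<in>UNIV. cnj (u x) * (complex_of_real lam * u x))"
        unfolding u_rep by (simp add: sum_distrib_left)
      also have "\<dots> = complex_of_real lam * inner_c u u"
        unfolding inner_c_def by (simp add: sum_distrib_left mult_ac)
      finally show ?thesis using u1 by simp
    qed
    have psi'_rep: "psi' (x,y) = (\<Sum>j\<in>J. a' j x * b j y)" for x y
    proof -
      have "(\<Sum>j\<in>J. a' j x * b j y) = (\<Sum>j\<in>J. a j x * b j y - u x * (m j * b j y))"
        unfolding a'_def by (rule sum.cong) (auto simp: algebra_simps)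
      also have "\<dots> = (\<Sum>j\<in>J. a j x * b j y) - u x * (\<Sum>j\<in>J. m j * b j y)"
        by (simp add: sum_subtractf sum_distrib_left)
      finally have "(\<Sum>j\<in>J. a' j x * b j y) = (\<Sum>j\<in>J. a j x * b j y) - u x * (\<Sum>j\<in>J. m j * b j y)" .
      then show ?thesis unfolding psi'_def f_rep[symmetric] rep[rule_format, symmetric] by simp
    qed
    have dep: "(\<Sum>j\<in>J. d j * a' j x) = 0" for x
    proof -
      have "(\<Sum>j\<in>J. d j * a' j x) = (\<Sum>j\<in>J. d j * a j x - u x * (d j * m j))"
        unfolding a'_def by (rule sum.cong) (auto simp: algebra_simps)
      also have "\<dots> = (\<Sum>j\<in>J. d j * a j x) - u x * (\<Sum>j\<in>J. d j * m j)"
        by (simp add: sum_subtractf sum_distrib_left)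
      finally have "(\<Sum>j\<in>J. d j * a' j x) = (\<Sum>j\<in>J. d j * a j x) - u x * (\<Sum>j\<in>J. d j * m j)" .
      then show ?thesis unfolding dm u_rep[symmetric] by simp
    qed
    obtain j0 where j0J: "j0 \<in> J" and dj0: "d j0 \<noteq> 0"
    proof (rule ccontr)
      assume "\<not> thesis"
      then have "\<forall>j\<in>J. d j = 0" using that by blast
      then have "complex_of_real lam * u x = 0" for x unfolding u_rep by simp
      then have "u x = 0" for x using lp by simp
      then have "inner_c u u = 0" unfolding inner_c_def by simp
      then show False using u1 by simp
    qed
    define J' where "J' = J - {j0}"
    define b' where "b' j y = b j y - (d j / d j0) * b j0 y" for j y
    have finJ': "finite J'" using fin J'_def by simp
    have cJ0: "card J > 0" using fin j0J card_gt_0_iff by blast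
    have cardJ': "card J' < card J" unfolding J'_def using fin j0J cJ0 by simp
    have rep': "\<forall>x y. psi' (x,y) = (\<Sum>j\<in>J'. a' j x * b' j y)"
    proof (intro allI)
      fix x y
      have s1: "(\<Sum>j\<in>J. a' j x * b j y) = a' j0 x * b j0 y + (\<Sum>j\<in>J'. a' j x * b j y)"
        unfolding J'_def using fin j0J by (rule sum.remove)
      have s2: "d j0 * a' j0 x + (\<Sum>j\<in>J'. d j * a' j x) = 0"
        using dep[of x] unfolding J'_def using sum.remove[OF fin j0J, of "\<lambda>j. d j * a' j x"] by simp
      have "(\<Sum>j\<in>J'. a' j x * b' j y) = (\<Sum>j\<in>J'. a' j x * b j y - (b j0 y / d j0) * (d j * a' j x))"
        unfolding b'_def by (rule sum.cong) (auto simp: algebra_simps)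
      also have "\<dots> = (\<Sum>j\<in>J'. a' j x * b j y) - (b j0 y / d j0) * (\<Sum>j\<in>J'. d j * a' j x)"
        by (simp add: sum_subtractf sum_distrib_left)
      also have "(\<Sum>j\<in>J'. d j * a' j x) = - (d j0 * a' j0 x)" using s2 by (simp add: eq_neg_iff_add_eq_0 add.commute)
      finally have "(\<Sum>j\<in>J'. a' j x * b' j y) = (\<Sum>j\<in>J'. a' j x * b j y) + a' j0 x * b j0 y"
        using dj0 by simp
      then show "psi' (x,y) = (\<Sum>j\<in>J'. a' j x * b' j y)" unfolding psi'_rep s1 by simp
    qed
    obtain r where rle: "r \<le> card J'" and sd: "schmidt_decomp psi' r"
      using less.hyps[OF cardJ' finJ' rep'] by blast
    obtain s e g where spos: "\<forall>i<r. s i > 0" and eon: "orthonormal_fam r e" and gon: "orthonormal_fam r g"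
      and psi'eq: "psi' = (\<lambda>(x, y). \<Sum>i<r. complex_of_real (s i) * e i x * g i y)"
      using sd unfolding schmidt_decomp_def by blast
    have psi'xy: "psi' (x,y) = (\<Sum>i<r. complex_of_real (s i) * e i x * g i y)" for x y
      unfolding psi'eq by simp
    have c1: "(\<Sum>x\<in>UNIV. cnj (u x) * psi' (x,y)) = 0" for y
    proof -
      have "(\<Sum>x\<in>UNIV. cnj (u x) * psi' (x,y)) = f y - inner_c u u * f y"
        unfolding psi'_def f_def inner_c_def by (simp add: right_diff_distrib sum_subtractf sum_distrib_right mult_ac)
      then show ?thesis using u1 by simp
    qed
    have c2: "(\<Sum>y\<in>UNIV. cnj (f y) * psi' (x,y)) = 0" for x
    proof -
      have "(\<Sum>y\<in>UNIV. cnj (f y) * psi' (x,y)) = (\<Sum>y\<in>UNIV. cnj (f y) * psi (x,y)) - u x * inner_c f f"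
        unfolding psi'_def inner_c_def by (simp add: right_diff_distrib sum_subtractf sum_distrib_left mult_ac)
      then show ?thesis unfolding eig ff by simp
    qed
    have ue: "inner_c u (e k) = 0" if k: "k < r" for k
    proof -
      have "\<forall>y. (\<Sum>i<r. (complex_of_real (s i) * inner_c u (e i)) * g i y) = 0"
      proof
        fix y
        have "(\<Sum>i<r. (complex_of_real (s i) * inner_c u (e i)) * g i y)
            = (\<Sum>i<r. \<Sum>x\<in>UNIV. cnj (u x) * (complex_of_real (s i) * e i x * g i y))"
          unfolding inner_c_def by (simp add: sum_distrib_left sum_distrib_right mult_ac)
        also have "\<dots> = (\<Sum>x\<in>UNIV. \<Sum>i<r. cnj (u x) * (complex_of_real (s i) * e i x * g i y))"
          by (rule sum.swap)
        also have "\<dots> = (\<Sum>x\<in>UNIV. cnj (u x) * psi' (x,y))"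
          unfolding psi'xy by (simp add: sum_distrib_left)
        finally show "(\<Sum>i<r. (complex_of_real (s i) * inner_c u (e i)) * g i y) = 0" using c1 by simp
      qed
      then have "complex_of_real (s k) * inner_c u (e k) = 0" by (rule ortho_coeff_zero[OF gon _ k])
      moreover have "s k > 0" using spos k by blast
      ultimately show ?thesis by simp
    qed
    have fg: "inner_c f (g k) = 0" if k: "k < r" for k
    proof -
      have "\<forall>x. (\<Sum>i<r. (complex_of_real (s i) * inner_c f (g i)) * e i x) = 0"
      proof
        fix x
        have "(\<Sum>i<r. (complex_of_real (s i) * inner_c f (g i)) * e i x)
            = (\<Sum>i<r. \<Sum>y\<in>UNIV. cnj (f y) * (complex_of_real (s i) * e i x * g i y))"
          unfolding inner_c_def by (simp add: sum_distrib_left sum_distrib_right mult_ac)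
        also have "\<dots> = (\<Sum>y\<in>UNIV. \<Sum>i<r. cnj (f y) * (complex_of_real (s i) * e i x * g i y))"
          by (rule sum.swap)
        also have "\<dots> = (\<Sum>y\<in>UNIV. cnj (f y) * psi' (x,y))"
          unfolding psi'xy by (simp add: sum_distrib_left)
        finally show "(\<Sum>i<r. (complex_of_real (s i) * inner_c f (g i)) * e i x) = 0" using c2 by simp
      qed
      then have "complex_of_real (s k) * inner_c f (g k) = 0" by (rule ortho_coeff_zero[OF eon _ k])
      moreover have "s k > 0" using spos k by blast
      ultimately show ?thesis by simp
    qed
    define sq where "sq = sqrt lam"
    have sqp: "sq > 0" using lp sq_def by simp
    have sq2: "sq * sq = lam" using lp sq_def by simp
    define f0 where "f0 = (\<lambda>y. complex_of_real (1/sq) * f y)"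
    have f0f0: "inner_c f0 f0 = 1"
    proof -
      have "inner_c f0 f0 = complex_of_real (1/sq) * complex_of_real (1/sq) * complex_of_real lam"
        unfolding f0_def inner_c_scale1 inner_c_scale2 ff by simp
      also have "\<dots> = 1" using sqp sq2 lp by (simp add: field_simps of_real_mult[symmetric] del: of_real_mult)
      finally show ?thesis .
    qed
    have f0g: "inner_c f0 (g k) = 0" if "k < r" for k
      unfolding f0_def inner_c_scale1 using fg[OF that] by simp
    define s2 where "s2 = case_nat sq s"
    define e2 where "e2 = case_nat u e"
    define g2 where "g2 = case_nat f0 g"
    have s2pos: "\<forall>i<Suc r. s2 i > 0"
    proof (intro allI impI)
      fix i assume "i < Suc r" then show "s2 i > 0" using sqp spos unfolding s2_def by (cases i) auto
    qed
    have e2on: "orthonormal_fam (Suc r) e2"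
      unfolding orthonormal_fam_def
    proof (intro allI impI)
      fix i j assume i: "i < Suc r" and j: "j < Suc r"
      show "inner_c (e2 i) (e2 j) = (if i = j then 1 else 0)"
      proof (cases i)
        case 0 then show ?thesis
          using u1 ue j unfolding e2_def by (cases j) auto
      next
        case (Suc k)
        then show ?thesis
          using ue[of k] i j eon inner_c_cnj[of "e k" u] unfolding e2_def orthonormal_fam_def
          by (cases j) auto
      qed
    qed
    have g2on: "orthonormal_fam (Suc r) g2"
      unfolding orthonormal_fam_def
    proof (intro allI impI)
      fix i j assume i: "i < Suc r" and j: "j < Suc r"
      show "inner_c (g2 i) (g2 j) = (if i = j then 1 else 0)"
      proof (cases i)
        case 0 then show ?thesis
          using f0f0 f0g j unfolding g2_def by (cases j) auto
      next
        case (Suc k)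
        then show ?thesis
          using f0g[of k] i j gon inner_c_cnj[of "g k" f0] unfolding g2_def orthonormal_fam_def
          by (cases j) auto
      qed
    qed
    have psieq: "psi = (\<lambda>(x, y). \<Sum>i<Suc r. complex_of_real (s2 i) * e2 i x * g2 i y)"
    proof (rule ext)
      fix p :: "'x \<times> 'y"
      obtain x y where p: "p = (x,y)" by (cases p)
      have 1: "complex_of_real sq * u x * f0 y = u x * f y"
        unfolding f0_def using sqp by (simp add: field_simps)
      have "psi (x,y) = u x * f y + psi' (x,y)" unfolding psi'_def by simp
      also have "\<dots> = complex_of_real sq * u x * f0 y + psi' (x,y)" by (simp only: 1)
      also have "\<dots> = (\<Sum>i<Suc r. complex_of_real (s2 i) * e2 i x * g2 i y)"
        unfolding sum.lessThan_Suc_shift psi'xy s2_def e2_def g2_def by simp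
      finally show "psi p = (\<lambda>(x, y). \<Sum>i<Suc r. complex_of_real (s2 i) * e2 i x * g2 i y) p"
        unfolding p by simp
    qed
    have "schmidt_decomp psi (Suc r)"
      unfolding schmidt_decomp_def using s2pos e2on g2on psieq by blast
    moreover have "Suc r \<le> card J" using rle cardJ' by simp
    ultimately show ?thesis by blast
  qed
qed



definition mix :: "('a1 \<times> 'b1) \<Rightarrow> ('a2 \<times> 'b2) \<Rightarrow> ('a1 \<times> 'a2) \<times> ('b1 \<times> 'b2)" where
  "mix p q = ((fst p, fst q), (snd p, snd q))"

lemma tensor_mix: "tensor_op S E (mix p q) (mix p' q') = S p p' * E q q'"
  by (cases p; cases q; cases p'; cases q') (simp add: tensor_op_def mix_def)

lemma sum_reorg:
  fixes h :: "(('a1::finite \<times> 'a2::finite) \<times> ('b1::finite \<times> 'b2::finite)) \<Rightarrow> complex"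
  shows "(\<Sum>X\<in>UNIV. h X) = (\<Sum>q\<in>(UNIV::('a2\<times>'b2) set). \<Sum>p\<in>(UNIV::('a1\<times>'b1) set). h (mix p q))"
proof -
  have "(\<Sum>q\<in>(UNIV::('a2\<times>'b2) set). \<Sum>p\<in>(UNIV::('a1\<times>'b1) set). h (mix p q))
      = (\<Sum>qp\<in>(UNIV::('a2\<times>'b2) set) \<times> (UNIV::('a1\<times>'b1) set). h (mix (snd qp) (fst qp)))"
    by (simp add: sum.cartesian_product split_beta)
  also have "\<dots> = (\<Sum>X\<in>UNIV. h X)"
    by (rule sum.reindex_bij_witness[where i = "\<lambda>X. ((snd (fst X), snd (snd X)), (fst (fst X), fst (snd X)))"
          and j = "\<lambda>qp. mix (snd qp) (fst qp)"]) (auto simp: mix_def)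
  finally show ?thesis by simp
qed

lemma expect_tensor_proj:
  fixes psi :: "(('a1::finite \<times> 'a2::finite) \<times> ('b1::finite \<times> 'b2::finite)) vec"
    and phi :: "('a1 \<times> 'b1) vec" and eta :: "('a2 \<times> 'b2) op"
  shows "expect psi (tensor_op (proj phi) eta) = expect (\<lambda>q. \<Sum>p\<in>UNIV. cnj (phi p) * psi (mix p q)) eta"
proof -
  define chi where "chi = (\<lambda>q. \<Sum>p\<in>UNIV. cnj (phi p) * psi (mix p q))"
  have ap: "apply_op (tensor_op (proj phi) eta) psi (mix p q) = phi p * apply_op eta chi q" for p q
  proof -
    have "apply_op (tensor_op (proj phi) eta) psi (mix p q)
        = (\<Sum>q'\<in>UNIV. \<Sum>p'\<in>UNIV. tensor_op (proj phi) eta (mix p q) (mix p' q') * psi (mix p' q'))"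
      unfolding apply_op_def by (rule sum_reorg)
    also have "\<dots> = (\<Sum>q'\<in>UNIV. \<Sum>p'\<in>UNIV. phi p * (eta q q' * (cnj (phi p') * psi (mix p' q'))))"
      unfolding tensor_mix proj_def by (simp add: mult_ac)
    also have "\<dots> = phi p * apply_op eta chi q"
      unfolding apply_op_def chi_def by (simp add: sum_distrib_left)
    finally show ?thesis .
  qed
  have "expect psi (tensor_op (proj phi) eta)
      = (\<Sum>q\<in>UNIV. \<Sum>p\<in>UNIV. cnj (psi (mix p q)) * apply_op (tensor_op (proj phi) eta) psi (mix p q))"
    unfolding expect_def inner_c_def by (rule sum_reorg)
  also have "\<dots> = (\<Sum>q\<in>UNIV. \<Sum>p\<in>UNIV. cnj (psi (mix p q)) * (phi p * apply_op eta chi q))"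
    unfolding ap ..
  also have "\<dots> = (\<Sum>q\<in>UNIV. cnj (chi q) * apply_op eta chi q)"
    unfolding chi_def by (simp add: sum_distrib_right cnj_sum mult_ac)
  also have "\<dots> = expect chi eta" unfolding expect_def inner_c_def ..
  finally show ?thesis unfolding chi_def .
qed

lemma tensor_sum:
  "tensor_op (\<lambda>u v. \<Sum>i\<in>I. k i * S i u v) E = (\<lambda>X Y. \<Sum>i\<in>I. k i * tensor_op (S i) E X Y)"
  unfolding tensor_op_def by (intro ext) (auto simp: sum_distrib_right sum_distrib_left mult_ac split: prod.splits)

lemma expect_sum:
  fixes psi :: "('i::finite) vec"
  shows "expect psi (\<lambda>X Y. \<Sum>i\<in>I. k i * T i X Y) = (\<Sum>i\<in>I. k i * expect psi (T i))"
proof -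
  have "expect psi (\<lambda>X Y. \<Sum>i\<in>I. k i * T i X Y) = (\<Sum>x\<in>UNIV. \<Sum>y\<in>UNIV. \<Sum>i\<in>I. k i * (cnj (psi x) * T i x y * psi y))"
    unfolding expect_def inner_c_def apply_op_def by (simp add: sum_distrib_left sum_distrib_right mult_ac)
  also have "\<dots> = (\<Sum>x\<in>UNIV. \<Sum>i\<in>I. \<Sum>y\<in>UNIV. k i * (cnj (psi x) * T i x y * psi y))"
    by (rule sum.cong[OF refl], rule sum.swap)
  also have "\<dots> = (\<Sum>i\<in>I. \<Sum>x\<in>UNIV. \<Sum>y\<in>UNIV. k i * (cnj (psi x) * T i x y * psi y))"
    by (rule sum.swap)
  also have "\<dots> = (\<Sum>i\<in>I. k i * expect psi (T i))"
    unfolding expect_def inner_c_def apply_op_def by (simp add: sum_distrib_left sum_distrib_right mult_ac)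
  finally show ?thesis .
qed



lemma trivial_rep:
  fixes psi :: "('x::finite \<times> 'y::finite) vec"
  shows "\<forall>x y. psi (x,y) = (\<Sum>j\<in>UNIV. (\<lambda>j x. if x = j then 1 else 0) j x * (\<lambda>j y. psi (j,y)) j y)"
proof (intro allI)
  fix x y
  have "(\<Sum>j\<in>UNIV. (\<lambda>j x. if x = j then 1 else 0) j x * (\<lambda>j y. psi (j,y)) j y)
      = (\<Sum>j\<in>UNIV. if j = x then psi (x,y) else 0)" by (rule sum.cong) auto
  then show "psi (x,y) = (\<Sum>j\<in>UNIV. (\<lambda>j x. if x = j then 1 else 0) j x * (\<lambda>j y. psi (j,y)) j y)" by simp
qed

lemma schmidt_decomp_rank:
  fixes psi :: "('x::finite \<times> 'y::finite) vec"
  shows "schmidt_decomp psi (schmidt_rank psi)"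
proof -
  have fu: "finite (UNIV::'x set)" by simp
  obtain r where "schmidt_decomp psi r"
    using svd_exists[OF fu trivial_rep[of psi]] by blast
  then show ?thesis unfolding schmidt_rank_def by (rule LeastI)
qed

lemma rank_le:
  fixes psi :: "('x::finite \<times> 'y::finite) vec" and J :: "'j set"
  assumes "finite J" "\<forall>x y. psi (x,y) = (\<Sum>j\<in>J. a j x * b j y)"
  shows "schmidt_rank psi \<le> card J"
proof -
  obtain r where r: "r \<le> card J" and sd: "schmidt_decomp psi r"
    using svd_exists[OF assms] by blast
  have "schmidt_rank psi \<le> r" unfolding schmidt_rank_def using sd by (rule Least_le)
  then show ?thesis using r by simp
qed

lemma rank_le_card:
  fixes psi :: "('x::finite \<times> 'y::finite) vec"
  shows "schmidt_rank psi \<le> CARD('x)"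
proof -
  have fu: "finite (UNIV::'x set)" by simp
  show ?thesis using rank_le[OF fu trivial_rep[of psi]] by simp
qed

lemma sum_UNIV_pair: "(\<Sum>p\<in>UNIV. g p) = (\<Sum>a\<in>UNIV. \<Sum>b\<in>UNIV. g (a,b))"
  by (simp add: sum.cartesian_product split_beta)

lemma sum_swap4:
  "(\<Sum>a\<in>A. \<Sum>b\<in>B. \<Sum>l\<in>L. \<Sum>j\<in>M. F a b l j) = (\<Sum>l\<in>L. \<Sum>j\<in>M. \<Sum>a\<in>A. \<Sum>b\<in>B. F a b l j)"
proof -
  have "(\<Sum>a\<in>A. \<Sum>b\<in>B. \<Sum>l\<in>L. \<Sum>j\<in>M. F a b l j) = (\<Sum>a\<in>A. \<Sum>l\<in>L. \<Sum>b\<in>B. \<Sum>j\<in>M. F a b l j)"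
    by (rule sum.cong[OF refl], rule sum.swap)
  also have "\<dots> = (\<Sum>l\<in>L. \<Sum>a\<in>A. \<Sum>b\<in>B. \<Sum>j\<in>M. F a b l j)" by (rule sum.swap)
  also have "\<dots> = (\<Sum>l\<in>L. \<Sum>a\<in>A. \<Sum>j\<in>M. \<Sum>b\<in>B. F a b l j)"
    by (rule sum.cong[OF refl], rule sum.cong[OF refl], rule sum.swap)
  also have "\<dots> = (\<Sum>l\<in>L. \<Sum>j\<in>M. \<Sum>a\<in>A. \<Sum>b\<in>B. F a b l j)"
    by (rule sum.cong[OF refl], rule sum.swap)
  finally show ?thesis .
qed

lemma chi_rank:
  fixes psi :: "(('a1::finite \<times> 'a2::finite) \<times> ('b1::finite \<times> 'b2::finite)) vec"
    and phi :: "('a1 \<times> 'b1) vec"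
  assumes K: "schmidt_rank psi \<le> K" and N: "schmidt_rank phi \<le> N"
  shows "schmidt_rank (\<lambda>q. \<Sum>p\<in>UNIV. cnj (phi p) * psi (mix p q)) \<le> K * N"
proof -
  define R1 where "R1 = schmidt_rank psi"
  define R2 where "R2 = schmidt_rank phi"
  obtain s e f where psieq: "psi = (\<lambda>(x, y). \<Sum>i<R1. complex_of_real (s i) * e i x * f i y)"
    using schmidt_decomp_rank[of psi] unfolding schmidt_decomp_def R1_def by blast
  obtain t al be where phieq: "phi = (\<lambda>(x, y). \<Sum>i<R2. complex_of_real (t i) * al i x * be i y)"
    using schmidt_decomp_rank[of phi] unfolding schmidt_decomp_def R2_def by blast
  define J where "J = {..<R2} \<times> {..<R1}"
  define A where "A lj a2 = complex_of_real (t (fst lj)) * complex_of_real (s (snd lj)) *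
      (\<Sum>a1\<in>UNIV. cnj (al (fst lj) a1) * e (snd lj) (a1,a2))" for lj a2
  define B where "B lj b2 = (\<Sum>b1\<in>UNIV. cnj (be (fst lj) b1) * f (snd lj) (b1,b2))" for lj b2
  define chi where "chi = (\<lambda>q. \<Sum>p\<in>UNIV. cnj (phi p) * psi (mix p q))"
  define FF where "FF a1 b1 l j a2 b2 = complex_of_real (t l) * complex_of_real (s j) *
      (cnj (al l a1) * e j (a1,a2)) * (cnj (be l b1) * f j (b1,b2))" for a1 b1 l j a2 b2
  have rep: "\<forall>a2 b2. chi (a2,b2) = (\<Sum>lj\<in>J. A lj a2 * B lj b2)"
  proof (intro allI)
    fix a2 b2
    have "chi (a2,b2) = (\<Sum>a1\<in>UNIV. \<Sum>b1\<in>UNIV. cnj (phi (a1,b1)) * psi ((a1,a2),(b1,b2)))"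
      unfolding chi_def sum_UNIV_pair[of "\<lambda>p. cnj (phi p) * psi (mix p (a2,b2))"] by (simp add: mix_def)
    also have "\<dots> = (\<Sum>a1\<in>UNIV. \<Sum>b1\<in>UNIV. \<Sum>l<R2. \<Sum>j<R1. FF a1 b1 l j a2 b2)"
    proof (intro sum.cong refl)
      fix a1 b1
      have cphi: "cnj (phi (a1,b1)) = (\<Sum>l<R2. complex_of_real (t l) * (cnj (al l a1) * cnj (be l b1)))"
        unfolding phieq by (simp add: cnj_sum mult.assoc)
      have psixy: "psi ((a1,a2),(b1,b2)) = (\<Sum>j<R1. complex_of_real (s j) * (e j (a1,a2) * f j (b1,b2)))"
        unfolding psieq by (simp add: mult.assoc)
      show "cnj (phi (a1,b1)) * psi ((a1,a2),(b1,b2)) = (\<Sum>l<R2. \<Sum>j<R1. FF a1 b1 l j a2 b2)"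
        unfolding cphi psixy sum_product by (intro sum.cong refl) (simp add: FF_def mult_ac)
    qed
    also have "\<dots> = (\<Sum>l<R2. \<Sum>j<R1. \<Sum>a1\<in>UNIV. \<Sum>b1\<in>UNIV. FF a1 b1 l j a2 b2)"
      by (rule sum_swap4)
    also have "\<dots> = (\<Sum>l<R2. \<Sum>j<R1. A (l,j) a2 * B (l,j) b2)"
    proof (intro sum.cong refl)
      fix l j
      show "(\<Sum>a1\<in>UNIV. \<Sum>b1\<in>UNIV. FF a1 b1 l j a2 b2) = A (l,j) a2 * B (l,j) b2"
        unfolding A_def B_def FF_def fst_conv snd_conv mult.assoc[of "complex_of_real (t l) * complex_of_real (s j)"] sum_product
        by (simp add: sum_distrib_left mult_ac)
    qed
    also have "\<dots> = (\<Sum>lj\<in>J. A lj a2 * B lj b2)"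
      unfolding J_def by (simp add: sum.cartesian_product split_beta)
    finally show "chi (a2,b2) = (\<Sum>lj\<in>J. A lj a2 * B lj b2)" .
  qed
  have "schmidt_rank chi \<le> card J" by (rule rank_le[OF _ rep]) (simp add: J_def)
  also have "card J = R2 * R1" unfolding J_def by (simp add: card_cartesian_product)
  also have "\<dots> \<le> N * K" using K N unfolding R1_def R2_def by (intro mult_le_mono)
  finally show ?thesis unfolding chi_def by (simp add: mult.commute)
qed



theorem lemma1:
  fixes sigma :: "(('a1::finite) \<times> ('b1::finite)) op"
    and eta :: "(('a2::finite) \<times> ('b2::finite)) op"
    and N K :: nat
  assumes "N \<ge> 1" and "K \<ge> 1"
    and "psd_op sigma" and "schmidt_number sigma = N"
    and "pos_on_SN eta (K * N)"
  shows "pos_on_SN (tensor_op sigma eta) K"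
proof -
  have hs: "hermitian_op sigma" using assms(3) unfolding psd_op_def by simp
  have he: "hermitian_op eta" and pe: "\<forall>psi. schmidt_rank psi \<le> K * N \<longrightarrow> 0 \<le> Re (expect psi eta)"
    using assms(5) unfolding pos_on_SN_def by auto
  have hT: "hermitian_op (tensor_op sigma eta)"
    unfolding hermitian_op_def
  proof (intro allI)
    fix X Y :: "('a1 \<times> 'a2) \<times> ('b1 \<times> 'b2)"
    obtain a1 a2 b1 b2 where X: "X = ((a1,a2),(b1,b2))" by (metis prod.exhaust)
    obtain a1' a2' b1' b2' where Y: "Y = ((a1',a2'),(b1',b2'))" by (metis prod.exhaust)
    show "tensor_op sigma eta Y X = cnj (tensor_op sigma eta X Y)"
      unfolding X Y tensor_op_def using herm_cnj[OF hs] herm_cnj[OF he] by simp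
  qed
  obtain n :: nat and c phi where cpos: "\<forall>i<n. c i \<ge> 0"
    and sigeq: "sigma = (\<lambda>u v. \<Sum>i<n. complex_of_real (c i) * proj (phi i) u v)"
    using psd_decomp[OF assms(3)] by blast
  have "sn_le sigma CARD('a1)"
    unfolding sn_le_def using cpos sigeq rank_le_card by blast
  then have "sn_le sigma (schmidt_number sigma)"
    unfolding schmidt_number_def by (rule LeastI)
  then obtain n' :: nat and c' phi' where cpos': "\<forall>i<n'. c' i \<ge> 0 \<and> schmidt_rank (phi' i) \<le> N"
    and sigeq': "sigma = (\<lambda>u v. \<Sum>i<n'. complex_of_real (c' i) * proj (phi' i) u v)"
    unfolding sn_le_def assms(4) by blast
  have "0 \<le> Re (expect psi (tensor_op sigma eta))" if rk: "schmidt_rank psi \<le> K" for psi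
  proof -
    define chi where "chi i = (\<lambda>q. \<Sum>p\<in>UNIV. cnj (phi' i p) * psi (mix p q))" for i
    have "expect psi (tensor_op sigma eta) = (\<Sum>i<n'. complex_of_real (c' i) * expect (chi i) eta)"
      unfolding sigeq' tensor_sum expect_sum expect_tensor_proj chi_def ..
    then have "Re (expect psi (tensor_op sigma eta)) = (\<Sum>i<n'. c' i * Re (expect (chi i) eta))"
      by (simp add: Re_sum)
    also have "\<dots> \<ge> 0"
    proof (rule sum_nonneg)
      fix i assume i: "i \<in> {..<n'}"
      have "schmidt_rank (chi i) \<le> K * N"
        unfolding chi_def using chi_rank[OF rk] cpos' i by simp
      then have "0 \<le> Re (expect (chi i) eta)" using pe by simp
      moreover have "c' i \<ge> 0" using cpos' i by simp
      ultimately show "0 \<le> c' i * Re (expect (chi i) eta)" by simp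
    qed
    finally show ?thesis .
  qed
  then show ?thesis unfolding pos_on_SN_def using hT by simp
qed

end
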